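(* Let $L\subset S^3$ be an oriented link and $\widehat{\mathcal{B}}_L$ its topological biquandle (as in the context). For every $a\in\widehat{\mathcal{B}}_L$, the maps $f_a,g_a\colon\widehat{\mathcal{B}}_L\to\widehat{\mathcal{B}}_L$ given by $f_a(x)=x\uparrow a$ and $g_a(x)=x\downarrow a$ are bijective.
   Context: An oriented link $L$ is an oriented subspace of $S^3$ homeomorphic to a finite disjoint union of circles. Let $N_L$ be a regular neighborhood of $L$ and $E_L$ the closure of $S^3\setminus N_L$; the orientation of $L$ induces an orientation of its normal bundle by the right-hand rule. Choose a 3-ball $B^3\subset S^3$ with $N_L\subset B^3$ and antipodal points $z_0,z_1\in\partial B^3$. For a path $a$, $\overline{a}(t)=a(1-t)$; $a\cdot b$ is concatenation. Let $\mathcal{B}_L$ be the set of pairs $(a_0,a_1)$ with $a_i\colon[0,1]\to E_L$ a path from a point of $\partial N_L$ to $z_i$ and $a_0(0)=a_1(0)$. Set $(a_0,a_1)\sim(b_0,b_1)$ if there is a homotopy $H_t\colon[0,1]\to E_L$ with $H_0=\overline{a_0}\cdot a_1$, $H_1=\overline{b_0}\cdot b_1$, $H_t(0)=z_0$, $H_t(1)=z_1$, $H_t(\tfrac12)\in\partial N_L$ for all $t$. Let $\widehat{\mathcal{B}}_L=\mathcal{B}_L/\!\sim$, with $[a_0,a_1]$ the class of $(a_0,a_1)$. For $p\in\partial N_L$, $m_p$ is the loop in $\partial N_L$ at $p$ going once positively around the meridian of the corresponding component of $L$. The (well-defined) operations on $\widehat{\mathcal{B}}_L$ are $[a_0,a_1]\uparrow[b_0,b_1]=[a_0\cdot\overline{b_0}\cdot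 m_{b_0(0)}\cdot b_0,\ a_1]$ and $[a_0,a_1]\downarrow[b_0,b_1]=[a_0,\ a_1\cdot\overline{b_1}\cdot m_{b_1(0)}\cdot b_1]$. The set $\widehat{\mathcal{B}}_L$ with these operations is called the topological biquandle of $L$. *)

theory Defs
  imports "HOL-Analysis.Analysis"
begin

definition S3 :: "(real^4) set" where
  "S3 = sphere 0 1"

text \<open>A point is (i, u, w) with |u| = 1 (longitude coordinate, giving the
  orientation of the i-th component) and |w| <= 1 (disc coordinate).\<close>

definition solid_tori :: "nat \<Rightarrow> (nat \<times> complex \<times> complex) set" where
  "solid_tori k = {(i, u, w). i < k \<and> norm u = 1 \<and> norm w \<le> 1}"

definition boundary_tori :: "nat \<Rightarrow> (nat \<times> complex \<times> complex) set" where
  "boundary_tori k = {(i, u, w). i < k \<and> norm u = 1 \<and> norm w = 1}"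

definition core_circles :: "nat \<Rightarrow> (nat \<times> complex \<times> complex) set" where
  "core_circles k = {(i, u, w). i < k \<and> norm u = 1 \<and> w = 0}"

text \<open>An embedding of k solid tori into S^3.  Its image is N_L, the image of
  the cores is the oriented link L (oriented by the u-coordinate).\<close>

definition tubular_link :: "nat \<Rightarrow> (nat \<times> complex \<times> complex \<Rightarrow> real^4) \<Rightarrow> bool" where
  "tubular_link k \<phi> \<longleftrightarrow>
     continuous_on (solid_tori k) \<phi> \<and> inj_on \<phi> (solid_tori k) \<and> \<phi> ` solid_tori k \<subseteq> S3"

definition link_of :: "nat \<Rightarrow> (nat \<times> complex \<times> complex \<Rightarrow> real^4) \<Rightarrow> (real^4) set" where
  "link_of k \<phi> = \<phi> ` core_circles k"

definition nbhd :: "nat \<Rightarrow> (nat \<times> complex \<times> complex \<Rightarrow> real^4) \<Rightarrow> (real^4) set" where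
  "nbhd k \<phi> = \<phi> ` solid_tori k"

definition bdry :: "nat \<Rightarrow> (nat \<times> complex \<times> complex \<Rightarrow> real^4) \<Rightarrow> (real^4) set" where
  "bdry k \<phi> = \<phi> ` boundary_tori k"

definition exterior :: "nat \<Rightarrow> (nat \<times> complex \<times> complex \<Rightarrow> real^4) \<Rightarrow> (real^4) set" where
  "exterior k \<phi> = closure (S3 - nbhd k \<phi>)"

definition meridian ::
  "nat \<Rightarrow> (nat \<times> complex \<times> complex \<Rightarrow> real^4) \<Rightarrow> real^4 \<Rightarrow> real \<Rightarrow> real^4" where
  "meridian k \<phi> p = (\<lambda>t. let q = inv_into (boundary_tori k) \<phi> p
                         in \<phi> (fst q, fst (snd q), snd (snd q) * cis (2 * pi * t)))"

definition bq_pairs ::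
  "nat \<Rightarrow> (nat \<times> complex \<times> complex \<Rightarrow> real^4) \<Rightarrow> real^4 \<Rightarrow> real^4
   \<Rightarrow> ((real \<Rightarrow> real^4) \<times> (real \<Rightarrow> real^4)) set" where
  "bq_pairs k \<phi> z0 z1 =
     {(a0, a1). path a0 \<and> path a1 \<and>
        path_image a0 \<subseteq> exterior k \<phi> \<and> path_image a1 \<subseteq> exterior k \<phi> \<and>
        pathstart a0 \<in> bdry k \<phi> \<and> pathstart a1 = pathstart a0 \<and>
        pathfinish a0 = z0 \<and> pathfinish a1 = z1}"

definition bq_rel ::
  "nat \<Rightarrow> (nat \<times> complex \<times> complex \<Rightarrow> real^4) \<Rightarrow> real^4 \<Rightarrow> real^4
   \<Rightarrow> (((real \<Rightarrow> real^4) \<times> (real \<Rightarrow> real^4)) \<times> ((real \<Rightarrow> real^4) \<times> (real \<Rightarrow> real^4))) set" where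
  "bq_rel k \<phi> z0 z1 =
     {((a0, a1), (b0, b1)).
        (a0, a1) \<in> bq_pairs k \<phi> z0 z1 \<and> (b0, b1) \<in> bq_pairs k \<phi> z0 z1 \<and>
        (\<exists>H :: real \<times> real \<Rightarrow> real^4.
           continuous_on ({0..1} \<times> {0..1}) H \<and>
           H ` ({0..1} \<times> {0..1}) \<subseteq> exterior k \<phi> \<and>
           (\<forall>s\<in>{0..1}. H (0, s) = (reversepath a0 +++ a1) s \<and>
                        H (1, s) = (reversepath b0 +++ b1) s) \<and>
           (\<forall>t\<in>{0..1}. H (t, 0) = z0 \<and> H (t, 1) = z1 \<and> H (t, 1/2) \<in> bdry k \<phi>))}"

definition top_biquandle ::
  "nat \<Rightarrow> (nat \<times> complex \<times> complex \<Rightarrow> real^4) \<Rightarrow> real^4 \<Rightarrow> real^4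
   \<Rightarrow> ((real \<Rightarrow> real^4) \<times> (real \<Rightarrow> real^4)) set set" where
  "top_biquandle k \<phi> z0 z1 = bq_pairs k \<phi> z0 z1 // bq_rel k \<phi> z0 z1"

definition bq_up ::
  "nat \<Rightarrow> (nat \<times> complex \<times> complex \<Rightarrow> real^4) \<Rightarrow> real^4 \<Rightarrow> real^4
   \<Rightarrow> ((real \<Rightarrow> real^4) \<times> (real \<Rightarrow> real^4)) set
   \<Rightarrow> ((real \<Rightarrow> real^4) \<times> (real \<Rightarrow> real^4)) set
   \<Rightarrow> ((real \<Rightarrow> real^4) \<times> (real \<Rightarrow> real^4)) set" where
  "bq_up k \<phi> z0 z1 X Y =
     (let a = (SOME x. x \<in> X); b = (SOME y. y \<in> Y)
      in bq_rel k \<phi> z0 z1 ``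
           {(fst a +++ (reversepath (fst b) +++ (meridian k \<phi> (pathstart (fst b)) +++ fst b)),
             snd a)})"

definition bq_down ::
  "nat \<Rightarrow> (nat \<times> complex \<times> complex \<Rightarrow> real^4) \<Rightarrow> real^4 \<Rightarrow> real^4
   \<Rightarrow> ((real \<Rightarrow> real^4) \<times> (real \<Rightarrow> real^4)) set
   \<Rightarrow> ((real \<Rightarrow> real^4) \<times> (real \<Rightarrow> real^4)) set
   \<Rightarrow> ((real \<Rightarrow> real^4) \<times> (real \<Rightarrow> real^4)) set" where
  "bq_down k \<phi> z0 z1 X Y =
     (let a = (SOME x. x \<in> X); b = (SOME y. y \<in> Y)
      in bq_rel k \<phi> z0 z1 ``
           {(fst a,
             snd a +++ (reversepath (snd b) +++ (meridian k \<phi> (pathstart (snd b)) +++ snd b)))})"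

end

theory Submission
  imports Defs
begin


lemma compact_solid_tori: "compact (solid_tori k)"
proof -
  have "solid_tori k = (\<Union>i<k. {i} \<times> (sphere (0::complex) 1 \<times> cball (0::complex) 1))"
    by (auto simp: solid_tori_def)
  moreover have "compact (\<Union>i<k. {i} \<times> (sphere (0::complex) 1 \<times> cball (0::complex) 1))"
    by (intro compact_UN compact_Times) auto
  ultimately show ?thesis by simp
qed

lemma unit_cnj: "norm (u::complex) = 1 \<Longrightarrow> u * cnj u = 1"
  by (metis complex_norm_square mult.right_neutral norm_one of_real_1 power2_eq_square)

lemma cis_inj_halfpi:
  assumes "\<bar>a\<bar> \<le> pi/2" "\<bar>b\<bar> \<le> pi/2" "cis a = cis b"
  shows "a = b"
proof -
  have "sin a = sin b" using arg_cong[OF assms(3), of Im] by simp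
  then have "arcsin (sin a) = arcsin (sin b)" by simp
  then show ?thesis using assms(1,2) by (simp add: arcsin_sin abs_le_iff)
qed

lemma unit_right_half_cis:
  assumes "norm z = 1" "Re z > 0"
  shows "\<exists>\<theta>. \<bar>\<theta>\<bar> \<le> pi/2 \<and> cis \<theta> = z"
proof -
  have h: "(Re z)\<^sup>2 + (Im z)\<^sup>2 = 1" using assms(1)
    by (metis cmod_power2 power_one)
  then have b: "-1 \<le> Im z" "Im z \<le> 1"
    by (smt (verit) power2_le_imp_le zero_le_power2 abs_le_square_iff power_one abs_le_iff)+
  define \<theta> where "\<theta> = arcsin (Im z)"
  have "cos \<theta> = sqrt (1 - (Im z)\<^sup>2)" using b by (simp add: \<theta>_def cos_arcsin)
  also have "\<dots> = Re z" using h assms(2)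
    by (metis add_diff_cancel_right' less_eq_real_def real_sqrt_abs power2_eq_square abs_of_pos add.commute)
  finally have "cis \<theta> = z" using b by (simp add: complex_eq_iff \<theta>_def)
  moreover have "\<bar>\<theta>\<bar> \<le> pi/2" using b arcsin_bounded[of "Im z"] by (auto simp: \<theta>_def abs_le_iff)
  ultimately show ?thesis by blast
qed

lemma bdry_sub_exterior:
  fixes \<beta> :: "real^3 \<Rightarrow> real^4"
  assumes tl: "tubular_link k \<phi>"
    and cb: "continuous_on (cball 0 1) \<beta>" and ib: "inj_on \<beta> (cball 0 1)"
    and bS: "\<beta> ` cball 0 1 \<subseteq> S3"
    and nb: "nbhd k \<phi> \<subseteq> \<beta> ` ball 0 1"
  shows "bdry k \<phi> \<subseteq> exterior k \<phi>"
proof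
  fix q assume "q \<in> bdry k \<phi>"
  then obtain i u0 w0 where i: "i < k" and u0: "norm u0 = 1" and w0: "norm w0 = 1"
    and q: "q = \<phi> (i, u0, w0)"
    by (auto simp: bdry_def boundary_tori_def)
  have cphi: "continuous_on (solid_tori k) \<phi>" and iphi: "inj_on \<phi> (solid_tori k)"
    using tl by (auto simp: tubular_link_def)
  show "q \<in> exterior k \<phi>"
  proof (rule ccontr)
    assume "q \<notin> exterior k \<phi>"
    then obtain \<epsilon> where \<epsilon>: "\<epsilon> > 0" and e1: "\<And>y. y \<in> S3 \<Longrightarrow> y \<notin> nbhd k \<phi> \<Longrightarrow> dist y q \<ge> \<epsilon>"
      unfolding exterior_def closure_approachable by (metis Diff_iff not_le)
    define D :: "(real \<times> complex) set" where "D = {-(pi/2)..pi/2} \<times> cball 0 1"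
    define e where "e = (\<lambda>z::real \<times> complex. (i, u0 * cis (fst z), snd z))"
    have cD: "compact D" unfolding D_def by (intro compact_Times) auto
    have eD: "e ` D \<subseteq> solid_tori k"
      using i u0 by (auto simp: D_def e_def solid_tori_def norm_mult)
    have ie: "inj_on e D"
    proof
      fix x y assume "x \<in> D" "y \<in> D" "e x = e y"
      then have "cis (fst x) = cis (fst y)" "snd x = snd y" using u0
        by (auto simp: e_def)
      moreover have "\<bar>fst x\<bar> \<le> pi/2" "\<bar>fst y\<bar> \<le> pi/2" using \<open>x \<in> D\<close> \<open>y \<in> D\<close>
        by (auto simp: D_def abs_le_iff)
      ultimately show "x = y" using cis_inj_halfpi by (simp add: prod_eq_iff)
    qed
    have ce: "continuous_on D e" unfolding e_def by (intro continuous_intros)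
    have cpe: "continuous_on D (\<phi> \<circ> e)"
      by (rule continuous_on_compose[OF ce continuous_on_subset[OF cphi eD]])
    have ipe: "inj_on (\<phi> \<circ> e) D"
      using ie iphi eD by (simp add: comp_inj_on inj_on_subset)
    define C where "C = solid_tori k \<inter> {x. fst x \<noteq> i \<or> Re (fst (snd x) * cnj u0) \<le> 0}"
    have clC: "closed {x :: nat \<times> complex \<times> complex. fst x \<noteq> i \<or> Re (fst (snd x) * cnj u0) \<le> 0}"
    proof -
      have "closed {x :: nat \<times> complex \<times> complex. fst x \<in> - {i}}"
      proof -
        have "{x :: nat \<times> complex \<times> complex. fst x \<in> - {i}} = (- {i}) \<times> UNIV" by auto
        moreover have "closed (- {i} :: nat set)" by (simp add: closed_def open_discrete)
        ultimately show ?thesis by (simp add: closed_Times)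
      qed
      moreover have "closed {x :: nat \<times> complex \<times> complex. Re (fst (snd x) * cnj u0) \<le> 0}"
        by (intro closed_Collect_le continuous_intros)
      ultimately show ?thesis unfolding Collect_disj_eq by (intro closed_Un) auto
    qed
    have cC: "compact C" unfolding C_def
      using compact_Int_closed[OF compact_solid_tori clC] .
    have CS: "C \<subseteq> solid_tori k" by (auto simp: C_def)
    have cpC: "compact (\<phi> ` C)"
      by (rule compact_continuous_image[OF continuous_on_subset[OF cphi CS] cC])
    have p0: "(i, u0, w0) \<in> solid_tori k" using i u0 w0 by (simp add: solid_tori_def)
    have p0C: "(i, u0, w0) \<notin> C"
      proof -
      have "Re (u0 * cnj u0) = 1" using unit_cnj[OF u0] by simp
      then have "\<not> Re (u0 * cnj u0) \<le> 0" by linarith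
      then show ?thesis unfolding C_def Int_iff mem_Collect_eq fst_conv snd_conv by blast
    qed
    have "q \<notin> \<phi> ` C"
    proof
      assume "q \<in> \<phi> ` C"
      then obtain x where "x \<in> C" "\<phi> (i,u0,w0) = \<phi> x" using q by auto
      then have "x = (i,u0,w0)" using iphi p0 CS inj_on_def by (metis subsetD)
      then show False using \<open>x \<in> C\<close> p0C by simp
    qed
    moreover have "open (- \<phi> ` C)" using compact_imp_closed[OF cpC] by (simp add: closed_def)
    ultimately obtain \<delta> where \<delta>: "\<delta> > 0" and dC0: "ball q \<delta> \<subseteq> - \<phi> ` C"
      using open_contains_ball by blast
    then have dC: "ball q \<delta> \<inter> \<phi> ` C = {}" by blast
    have near: "y \<in> (\<phi> \<circ> e) ` D" if yN: "y \<in> nbhd k \<phi>" and yd: "dist q y < \<delta>" for y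
    proof -
      obtain x where x: "x \<in> solid_tori k" "y = \<phi> x" using yN unfolding nbhd_def by blast
      have "x \<notin> C" using dC x yd by auto
      then have "fst x = i" "Re (fst (snd x) * cnj u0) > 0" using x(1) by (auto simp: C_def)
      moreover obtain u w where uw: "x = (fst x, u, w)" "norm u = 1" "norm w \<le> 1"
        using x(1) by (cases x) (auto simp: solid_tori_def)
      ultimately have re: "Re (u * cnj u0) > 0" by (metis fst_conv snd_conv)
      have "norm (u * cnj u0) = 1" using uw u0 by (simp add: norm_mult)
      then obtain \<theta> where th: "\<bar>\<theta>\<bar> \<le> pi/2" "cis \<theta> = u * cnj u0"
        using unit_right_half_cis re by blast
      have "u0 * cis \<theta> = u * (u0 * cnj u0)" using th(2) by (simp add: ac_simps)
      also have "\<dots> = u" using unit_cnj[OF u0] by simp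
      finally have "e (\<theta>, w) = x" using \<open>fst x = i\<close> uw by (metis e_def fst_conv snd_conv)
      moreover have "(\<theta>, w) \<in> D" using th uw by (auto simp: D_def abs_le_iff)
      ultimately show ?thesis using x by force
    qed
    define Op where "Op = ball 0 1 \<inter> \<beta> -` ball q (min \<epsilon> \<delta>)"
    have oO: "open Op" unfolding Op_def
      by (rule continuous_open_preimage[OF continuous_on_subset[OF cb]]) auto
    have bO: "\<beta> ` Op \<subseteq> (\<phi> \<circ> e) ` D"
    proof
      fix y assume "y \<in> \<beta> ` Op"
      then obtain x where x: "x \<in> ball 0 1" "y = \<beta> x" "dist q y < min \<epsilon> \<delta>"
        by (auto simp: Op_def)
      have "y \<in> S3" using bS x by auto
      then have "y \<in> nbhd k \<phi>" using e1[of y] x(3) by (force simp: dist_commute)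
      then show "y \<in> (\<phi> \<circ> e) ` D" using near x by auto
    qed
    define g where "g = the_inv_into D (\<phi> \<circ> e)"
    have cg: "continuous_on ((\<phi> \<circ> e) ` D) g"
      unfolding g_def by (rule continuous_on_inv_into[OF cpe cD ipe])
    define F where "F = g \<circ> \<beta>"
    have cF: "continuous_on Op F" unfolding F_def
      by (rule continuous_on_compose[OF continuous_on_subset[OF cb] continuous_on_subset[OF cg bO]])
        (auto simp: Op_def)
    have iF: "inj_on F Op" unfolding F_def
    proof (rule comp_inj_on)
      show "inj_on \<beta> Op" using ib by (rule inj_on_subset) (auto simp: Op_def)
      show "inj_on g (\<beta> ` Op)" unfolding g_def
        using inj_on_the_inv_into[OF ipe] bO inj_on_subset by blast
    qed
    have "open (F ` Op)"
      by (rule invariance_of_domain_gen[OF oO cF iF]) simp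
    have FD: "F ` Op \<subseteq> D"
    proof
      fix y assume "y \<in> F ` Op"
      then obtain x where "x \<in> Op" "y = g (\<beta> x)" by (auto simp: F_def)
      moreover have "\<beta> x \<in> (\<phi> \<circ> e) ` D" using bO \<open>x \<in> Op\<close> by blast
      ultimately show "y \<in> D" unfolding g_def using the_inv_into_into[OF ipe] by blast
    qed
    have "q \<in> nbhd k \<phi>" using q p0 by (auto simp: nbhd_def)
    then obtain x0 where x0: "x0 \<in> ball 0 1" "q = \<beta> x0" using nb by auto
    then have x0O: "x0 \<in> Op" using \<epsilon> \<delta> by (auto simp: Op_def)
    have D0: "(0, w0) \<in> D" using w0 by (simp add: D_def)
    have "(\<phi> \<circ> e) (0, w0) = q" using q by (simp add: e_def)
    then have "F x0 = (0, w0)" using x0 the_inv_into_f_f[OF ipe D0]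
      by (simp add: F_def g_def)
    then have "(0, w0) \<in> F ` Op" using x0O by force
    then obtain r where r: "r > 0" "ball (0, w0) r \<subseteq> F ` Op"
      using \<open>open (F ` Op)\<close> open_contains_ball by blast
    have "dist (0::real, w0) (0, complex_of_real (1 + r/2) * w0) < r"
      using r w0 by (simp add: dist_Pair_Pair dist_norm algebra_simps norm_mult)
    then have "(0, complex_of_real (1 + r/2) * w0) \<in> D" using r FD by (meson mem_ball subsetD)
    moreover have "norm (complex_of_real (1 + r/2) * w0) > 1" using r w0
      by (simp only: norm_mult norm_of_real) simp
    ultimately show False by (simp add: D_def)
  qed
qed



lemma quot_bij:
  assumes eq: "equiv P R"
    and TP: "\<And>x. x \<in> P \<Longrightarrow> T x \<in> P" and T'P: "\<And>x. x \<in> P \<Longrightarrow> T' x \<in> P"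
    and Tc: "\<And>x y. (x,y) \<in> R \<Longrightarrow> (T x, T y) \<in> R"
    and T'c: "\<And>x y. (x,y) \<in> R \<Longrightarrow> (T' x, T' y) \<in> R"
    and c1: "\<And>x. x \<in> P \<Longrightarrow> (T' (T x), x) \<in> R"
    and c2: "\<And>x. x \<in> P \<Longrightarrow> (T (T' x), x) \<in> R"
  shows "bij_betw (\<lambda>X. R `` {T (SOME x. x \<in> X)}) (P//R) (P//R)"
proof -
  have RP: "(x,y) \<in> R \<Longrightarrow> x \<in> P \<and> y \<in> P" for x y
    using eq by (auto simp: equiv_def refl_on_def)
  have sym: "(x,y) \<in> R \<Longrightarrow> (y,x) \<in> R" for x y
    using eq by (auto simp: equiv_def sym_def)
  have trans: "(x,y) \<in> R \<Longrightarrow> (y,z) \<in> R \<Longrightarrow> (x,z) \<in> R" for x y z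
    using eq unfolding equiv_def trans_def by blast
  have S: "(SOME x. x \<in> X) \<in> P \<and> X = R `` {SOME x. x \<in> X}" if "X \<in> P//R" for X
  proof -
    obtain x where x: "x \<in> P" "X = R``{x}" using \<open>X \<in> P//R\<close> by (rule quotientE)
    then have "x \<in> X" using equiv_class_self[OF eq] by simp
    define s where "s = (SOME x. x \<in> X)"
    have s: "s \<in> X" unfolding s_def using \<open>x \<in> X\<close> by (rule someI)
    then have xs: "(x, s) \<in> R" using x by simp
    then have "R``{x} = R``{s}" by (rule equiv_class_eq[OF eq])
    then have "s \<in> P \<and> X = R `` {s}" using x RP[OF xs] by simp
    then show ?thesis by (simp add: s_def)
  qed
  show ?thesis
  proof (rule bij_betw_imageI)
    show "inj_on (\<lambda>X. R `` {T (SOME x. x \<in> X)}) (P//R)"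
    proof
      fix X Y assume X: "X \<in> P//R" and Y: "Y \<in> P//R"
        and e: "R `` {T (SOME x. x \<in> X)} = R `` {T (SOME x. x \<in> Y)}"
      define sX where "sX = (SOME x. x \<in> X)"
      define sY where "sY = (SOME x. x \<in> Y)"
      have "sX \<in> P \<and> X = R``{sX}" unfolding sX_def by (rule S[OF X])
      then have sX: "sX \<in> P" "X = R``{sX}" by simp_all
      have "sY \<in> P \<and> Y = R``{sY}" unfolding sY_def by (rule S[OF Y])
      then have sY: "sY \<in> P" "Y = R``{sY}" by simp_all
      have "(T sX, T sY) \<in> R"
        using e eq_equiv_class_iff[OF eq TP[OF sX(1)] TP[OF sY(1)]] by (simp add: sX_def sY_def)
      then have "(T' (T sX), T' (T sY)) \<in> R" by (rule T'c)
      moreover have "(sX, T' (T sX)) \<in> R" using c1[OF sX(1)] by (rule sym)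
      moreover have "(T' (T sY), sY) \<in> R" using c1[OF sY(1)] .
      ultimately have "(sX, sY) \<in> R" using trans by blast
      then have "R``{sX} = R``{sY}" by (rule equiv_class_eq[OF eq])
      then show "X = Y" using sX(2) sY(2) by simp
    qed
    show "(\<lambda>X. R `` {T (SOME x. x \<in> X)}) ` (P//R) = P//R"
    proof
      show "(\<lambda>X. R `` {T (SOME x. x \<in> X)}) ` (P//R) \<subseteq> P//R"
      proof
        fix Z assume "Z \<in> (\<lambda>X. R `` {T (SOME x. x \<in> X)}) ` (P//R)"
        then obtain X where X: "X \<in> P//R" "Z = R `` {T (SOME x. x \<in> X)}" by blast
        have "T (SOME x. x \<in> X) \<in> P" using S[OF X(1)] TP by blast
        then show "Z \<in> P//R" unfolding X(2) by (rule quotientI)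
      qed
      show "P//R \<subseteq> (\<lambda>X. R `` {T (SOME x. x \<in> X)}) ` (P//R)"
      proof
        fix Y assume Y: "Y \<in> P//R"
        define y where "y = (SOME x. x \<in> Y)"
        have "y \<in> P \<and> Y = R``{y}" unfolding y_def by (rule S[OF Y])
        then have y: "y \<in> P" "Y = R``{y}" by simp_all
        define X where "X = R``{T' y}"
        have X: "X \<in> P//R" unfolding X_def using T'P[OF y(1)] by (rule quotientI)
        define x where "x = (SOME x. x \<in> X)"
        have "x \<in> P \<and> X = R``{x}" unfolding x_def by (rule S[OF X])
        moreover have "T' y \<in> X" unfolding X_def using equiv_class_self[OF eq T'P[OF y(1)]] .
        ultimately have "x \<in> X" using equiv_class_self[OF eq] by auto
        then have "(T' y, x) \<in> R" by (simp add: X_def)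
        then have "(T (T' y), T x) \<in> R" by (rule Tc)
        then have "(T x, T (T' y)) \<in> R" by (rule sym)
        then have "(T x, y) \<in> R" using c2[OF y(1)] trans by blast
        then have "R``{T x} = R``{y}" by (rule equiv_class_eq[OF eq])
        then have "R``{T x} = Y" using y(2) by simp
        then have "Y = R``{T (SOME x. x \<in> X)}" unfolding x_def by simp
        then show "Y \<in> (\<lambda>X. R `` {T (SOME x. x \<in> X)}) ` (P//R)"
          using X by (rule image_eqI)
      qed
    qed
  qed
qed



definition mhom :: "'a::topological_space set \<Rightarrow> 'a set \<Rightarrow> 'a \<Rightarrow> 'a \<Rightarrow> (real \<Rightarrow> 'a) \<Rightarrow> (real \<Rightarrow> 'a)
   \<Rightarrow> (real \<times> real \<Rightarrow> 'a) \<Rightarrow> bool" where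
  "mhom E B z0 z1 g h H \<longleftrightarrow>
     continuous_on ({0..1} \<times> {0..1}) H \<and> H ` ({0..1} \<times> {0..1}) \<subseteq> E \<and>
     (\<forall>s\<in>{0..1}. H (0, s) = g s \<and> H (1, s) = h s) \<and>
     (\<forall>t\<in>{0..1}. H (t, 0) = z0 \<and> H (t, 1) = z1 \<and> H (t, 1/2) \<in> B)"

lemma mhomD:
  assumes "mhom E B z0 z1 g h H"
  shows "continuous_on ({0..1} \<times> {0..1}) H"
    and "\<And>t s. t \<in> {0..1} \<Longrightarrow> s \<in> {0..1} \<Longrightarrow> H (t, s) \<in> E"
    and "\<And>s. s \<in> {0..1} \<Longrightarrow> H (0, s) = g s"
    and "\<And>s. s \<in> {0..1} \<Longrightarrow> H (1, s) = h s"
    and "\<And>t. t \<in> {0..1} \<Longrightarrow> H (t, 0) = z0"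
    and "\<And>t. t \<in> {0..1} \<Longrightarrow> H (t, 1) = z1"
    and "\<And>t. t \<in> {0..1} \<Longrightarrow> H (t, 1/2) \<in> B"
  using assms unfolding mhom_def image_subset_iff by blast+

lemma mhomI:
  assumes "continuous_on ({0..1} \<times> {0..1}) H"
    and "\<And>t s. t \<in> {0..1} \<Longrightarrow> s \<in> {0..1} \<Longrightarrow> H (t, s) \<in> E"
    and "\<And>s. s \<in> {0..1} \<Longrightarrow> H (0, s) = g s"
    and "\<And>s. s \<in> {0..1} \<Longrightarrow> H (1, s) = h s"
    and "\<And>t. t \<in> {0..1} \<Longrightarrow> H (t, 0) = z0"
    and "\<And>t. t \<in> {0..1} \<Longrightarrow> H (t, 1) = z1"
    and "\<And>t. t \<in> {0..1} \<Longrightarrow> H (t, 1/2) \<in> B"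
  shows "mhom E B z0 z1 g h H"
  using assms unfolding mhom_def image_subset_iff by blast

lemma mhom_refl:
  assumes "path g" "path_image g \<subseteq> E" "g 0 = z0" "g 1 = z1" "g (1/2) \<in> B"
  shows "mhom E B z0 z1 g g (\<lambda>x. g (snd x))"
proof (rule mhomI)
  show "continuous_on ({0..1} \<times> {0..1}) (\<lambda>x. g (snd x))"
    using assms(1) unfolding path_def
    by (rule continuous_on_compose2[of "{0..1}" g _ snd]) (auto intro: continuous_on_snd)
qed (use assms in \<open>auto simp: path_image_def\<close>)

lemma mhom_sym:
  assumes H: "mhom E B z0 z1 g h H"
  shows "mhom E B z0 z1 h g (\<lambda>x. H (1 - fst x, snd x))"
proof (rule mhomI)
  show "continuous_on ({0..1} \<times> {0..1}) (\<lambda>x. H (1 - fst x, snd x))"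
  proof (rule continuous_on_compose2[OF mhomD(1)[OF H], of _ "\<lambda>x. (1 - fst x, snd x)"])
    show "continuous_on ({0..1} \<times> {0..1}) (\<lambda>x::real\<times>real. (1 - fst x, snd x))"
      by (intro continuous_intros)
    show "(\<lambda>x::real\<times>real. (1 - fst x, snd x)) ` ({0..1} \<times> {0..1}) \<subseteq> {0..1} \<times> {0..1}"
      by (auto simp: image_subset_iff)
  qed
qed (auto intro!: mhomD[OF H])

lemma mhom_trans:
  assumes H1: "mhom E B z0 z1 g h H1" and H2: "mhom E B z0 z1 h l H2"
  shows "mhom E B z0 z1 g l (\<lambda>x. if fst x \<le> 1/2 then H1 (2 * fst x, snd x) else H2 (2 * fst x - 1, snd x))"
proof (rule mhomI)
  let ?S = "{0..1} \<times> {0..1::real}"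
  note c1 = mhomD(1)[OF H1] and c2 = mhomD(1)[OF H2]
  have eqmid: "H1 (2 * a, b) = H2 (2 * a - 1, b)" if "a = 1/2" "b \<in> {0..1}" for a b :: real
  proof -
    have "2 * a = 1" "2 * a - 1 = 0" using that(1) by simp_all
    then show ?thesis using that(2) mhomD(4)[OF H1] mhomD(3)[OF H2] by simp
  qed
  show "continuous_on ?S (\<lambda>x. if fst x \<le> 1/2 then H1 (2 * fst x, snd x) else H2 (2 * fst x - 1, snd x))"
  proof (rule continuous_on_cases_le)
    show "continuous_on {t \<in> ?S. fst t \<le> 1/2} (\<lambda>x. H1 (2 * fst x, snd x))"
    proof (rule continuous_on_compose2[OF c1, of _ "\<lambda>x. (2 * fst x, snd x)"])
      show "continuous_on {t \<in> ?S. fst t \<le> 1/2} (\<lambda>x::real\<times>real. (2 * fst x, snd x))"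
        by (intro continuous_intros)
      show "(\<lambda>x::real\<times>real. (2 * fst x, snd x)) ` {t \<in> ?S. fst t \<le> 1/2} \<subseteq> ?S"
        by (auto simp: image_subset_iff)
    qed
    show "continuous_on {t \<in> ?S. 1/2 \<le> fst t} (\<lambda>x. H2 (2 * fst x - 1, snd x))"
    proof (rule continuous_on_compose2[OF c2, of _ "\<lambda>x. (2 * fst x - 1, snd x)"])
      show "continuous_on {t \<in> ?S. 1/2 \<le> fst t} (\<lambda>x::real\<times>real. (2 * fst x - 1, snd x))"
        by (intro continuous_intros)
      show "(\<lambda>x::real\<times>real. (2 * fst x - 1, snd x)) ` {t \<in> ?S. 1/2 \<le> fst t} \<subseteq> ?S"
        by (auto simp: image_subset_iff)
    qed
    show "continuous_on ?S fst" by (intro continuous_intros)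
    show "H1 (2 * fst t, snd t) = H2 (2 * fst t - 1, snd t)" if "t \<in> ?S" "fst t = 1/2" for t
      using eqmid that by auto
  qed
qed (auto intro!: mhomD[OF H1] mhomD[OF H2])

lemma mhom_from_homotopic:
  assumes hp: "homotopic_paths E p p'" and pB: "pathfinish p \<in> B" and q: "path q" "path_image q \<subseteq> E"
    and qs: "pathstart q = pathfinish p" and ps: "pathstart p = z0" and qf: "pathfinish q = z1"
  shows "\<exists>H. mhom E B z0 z1 (p +++ q) (p' +++ q) H"
proof -
  obtain h where ch: "continuous_on ({0..1} \<times> {0..1}) h" and hE: "h \<in> ({0..1} \<times> {0..1}) \<rightarrow> E"
    and h0: "\<forall>x \<in> {0..1}. h(0,x) = p x" and h1: "\<forall>x \<in> {0..1}. h(1,x) = p' x"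
    and hse: "\<forall>t \<in> {0..1::real}. pathstart(h \<circ> Pair t) = pathstart p \<and> pathfinish(h \<circ> Pair t) = pathfinish p"
    using hp unfolding homotopic_paths by blast
  define H where "H = (\<lambda>y. ((h \<circ> Pair (fst y)) +++ q) (snd y))"
  have Hv: "H (t, s) = (if s \<le> 1/2 then h (t, 2 * s) else q (2 * s - 1))" for t s
    by (simp add: H_def joinpaths_def)
  have "mhom E B z0 z1 (p +++ q) (p' +++ q) H"
  proof (rule mhomI)
    show "continuous_on ({0..1} \<times> {0..1}) H" unfolding H_def
    proof (rule continuous_on_homotopic_join_lemma)
      show "continuous_on ({0..1} \<times> {0..1}) (\<lambda>y. (h \<circ> Pair (fst y)) (snd y))"
        using ch by (simp add: o_def)
      show "continuous_on ({0..1} \<times> {0..1}) (\<lambda>y::real\<times>real. q (snd y))"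
        using q(1) unfolding path_def
        by (rule continuous_on_compose2[of "{0..1}" q _ snd]) (auto intro: continuous_on_snd)
      show "pathfinish (h \<circ> Pair t) = pathstart q" if "t \<in> {0..1}" for t
        using hse that qs by simp
    qed
    show "H (t, s) \<in> E" if "t \<in> {0..1}" "s \<in> {0..1}" for t s
    proof (cases "s \<le> 1/2")
      case True
      then have "(t, 2 * s) \<in> {0..1} \<times> {0..1}" using that by auto
      then show ?thesis using True hE by (auto simp: Hv)
    next
      case False
      then have "q (2 * s - 1) \<in> path_image q" using that by (auto simp: path_image_def)
      then show ?thesis using False q(2) by (auto simp: Hv)
    qed
    show "H (0, s) = (p +++ q) s" if "s \<in> {0..1}" for s
      using that h0 by (auto simp: Hv joinpaths_def)
    show "H (1, s) = (p' +++ q) s" if "s \<in> {0..1}" for s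
      using that h1 by (auto simp: Hv joinpaths_def)
    show "H (t, 0) = z0" if "t \<in> {0..1}" for t
      using hse that ps by (simp add: Hv pathstart_def)
    show "H (t, 1) = z1" if "t \<in> {0..1}" for t
      using qf by (simp add: Hv pathfinish_def)
    show "H (t, 1/2) \<in> B" if "t \<in> {0..1}" for t
      using hse that pB by (simp add: Hv pathfinish_def)
  qed
  then show ?thesis by blast
qed

lemma mhom_prefix:
  assumes H: "mhom E B z0 z1 (reversepath a0 +++ a1) (reversepath b0 +++ b1) H"
    and pc: "path c" "path_image c \<subseteq> E" "pathstart c = z0" "pathfinish c = z0"
    and a0: "pathfinish a0 = z0" and b0: "pathfinish b0 = z0"
  shows "mhom E B z0 z1 (reversepath (a0 +++ c) +++ a1) (reversepath (b0 +++ c) +++ b1)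
     (\<lambda>x. if snd x \<le> 1/4 then reversepath c (4 * snd x) else H (fst x, min (2 * snd x - 1/2) (snd x)))"
    (is "mhom _ _ _ _ _ _ ?K")
proof -
  have ra: "reversepath (a0 +++ c) = reversepath c +++ reversepath a0"
    using a0 pc(3) by (simp add: reversepath_joinpaths)
  have rb: "reversepath (b0 +++ c) = reversepath c +++ reversepath b0"
    using b0 pc(3) by (simp add: reversepath_joinpaths)
  let ?S = "{0..1} \<times> {0..1::real}"
  have Kv: "?K (t, s) = (if s \<le> 1/4 then reversepath c (4 * s) else H (t, min (2 * s - 1/2) s))" for t s
    by simp
  have mm: "min (2 * s - 1/2) s \<in> {0..1}" if "s \<in> {0..1}" "\<not> s \<le> 1/4" for s :: real
    using that by (auto simp: min_def)
  have gen: "?K (t, s) = ((reversepath c +++ reversepath x0) +++ x1) s"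
    if Hx: "\<And>s. s \<in> {0..1} \<Longrightarrow> H (t, s) = (reversepath x0 +++ x1) s" and s: "s \<in> {0..1}" for t s x0 x1
  proof (cases "s \<le> 1/4")
    case True
    then show ?thesis using s by (simp add: joinpaths_def)
  next
    case F: False
    show ?thesis
    proof (cases "s \<le> 1/2")
      case True
      then have "min (2 * s - 1/2) s = 2 * s - 1/2" by simp
      moreover have "2 * s - 1/2 \<in> {0..1}" using True F by auto
      ultimately have "H (t, min (2 * s - 1/2) s) = reversepath x0 (2 * (2 * s - 1/2))"
        using Hx True by (simp add: joinpaths_def)
      moreover have "2 * (2 * s - 1/2) = 2 * (2 * s) - 1" by simp
      ultimately show ?thesis using F True by (simp add: joinpaths_def)
    next
      case False
      then have "min (2 * s - 1/2) s = s" by simp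
      then show ?thesis using Hx s F False by (simp add: joinpaths_def)
    qed
  qed
  show ?thesis unfolding ra rb
  proof (rule mhomI)
    show "continuous_on ?S ?K"
    proof (rule continuous_on_cases_le)
      have pr: "path (reversepath c)" using pc by simp
      show "continuous_on {t \<in> ?S. snd t \<le> 1/4} (\<lambda>x. reversepath c (4 * snd x))"
        by (rule continuous_on_compose2[OF pr[unfolded path_def], of _ "\<lambda>x. 4 * snd x"])
           (auto intro!: continuous_intros)
      show "continuous_on {t \<in> ?S. 1/4 \<le> snd t} (\<lambda>x. H (fst x, min (2 * snd x - 1/2) (snd x)))"
      proof (rule continuous_on_compose2[OF mhomD(1)[OF H], of _ "\<lambda>x. (fst x, min (2 * snd x - 1/2) (snd x))"])
        show "continuous_on {t \<in> ?S. 1/4 \<le> snd t} (\<lambda>x::real\<times>real. (fst x, min (2 * snd x - 1/2) (snd x)))"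
          by (intro continuous_intros continuous_on_min)
        show "(\<lambda>x::real\<times>real. (fst x, min (2 * snd x - 1/2) (snd x))) ` {t \<in> ?S. 1/4 \<le> snd t} \<subseteq> ?S"
          by (auto simp: image_subset_iff min_def)
      qed
      show "continuous_on ?S snd" by (intro continuous_intros)
      show "reversepath c (4 * snd x) = H (fst x, min (2 * snd x - 1/2) (snd x))"
        if "x \<in> ?S" "snd x = 1/4" for x
      proof -
        have e1: "reversepath c (4 * snd x) = c 0" unfolding reversepath_def that(2) by simp
        have e2: "H (fst x, min (2 * snd x - 1/2) (snd x)) = H (fst x, 0)" unfolding that(2) by simp
        have "fst x \<in> {0..1}" using that(1) by auto
        then show ?thesis unfolding e1 e2 using mhomD(5)[OF H] pc(3) by (simp add: pathstart_def)
      qed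
    qed
    show "?K (t, s) \<in> E" if "t \<in> {0..1}" "s \<in> {0..1}" for t s
    proof (cases "s \<le> 1/4")
      case True
      then have "reversepath c (4 * s) \<in> path_image (reversepath c)" using that
        unfolding path_image_def by auto
      then show ?thesis using True pc(2) by auto
    next
      case False
      then show ?thesis using mm[OF that(2) False] that(1) mhomD(2)[OF H] by simp
    qed
    show "?K (0, s) = ((reversepath c +++ reversepath a0) +++ a1) s" if "s \<in> {0..1}" for s
      using gen[OF mhomD(3)[OF H] that] .
    show "?K (1, s) = ((reversepath c +++ reversepath b0) +++ b1) s" if "s \<in> {0..1}" for s
      using gen[OF mhomD(4)[OF H] that] .
    show "?K (t, 0) = z0" if "t \<in> {0..1}" for t
      using pc(4) by (simp add: reversepath_def pathfinish_def)
    show "?K (t, 1) = z1" if "t \<in> {0..1}" for t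
      using mhomD(6)[OF H that] by simp
    show "?K (t, 1/2) \<in> B" if "t \<in> {0..1}" for t
      using mhomD(7)[OF H that] by simp
  qed
qed



lemma meridian_loop:
  assumes tl: "tubular_link k \<phi>" and p: "p \<in> bdry k \<phi>"
  shows "path (meridian k \<phi> p) \<and> path_image (meridian k \<phi> p) \<subseteq> bdry k \<phi> \<and>
         pathstart (meridian k \<phi> p) = p \<and> pathfinish (meridian k \<phi> p) = p"
proof -
  have cphi: "continuous_on (solid_tori k) \<phi>" using tl by (simp add: tubular_link_def)
  define q where "q = inv_into (boundary_tori k) \<phi> p"
  have qB: "q \<in> boundary_tori k" using p unfolding q_def bdry_def by (rule inv_into_into)
  have pq: "\<phi> q = p" using p unfolding q_def bdry_def by (rule f_inv_into_f)
  obtain j u w where q: "q = (j, u, w)" and j: "j < k" and u: "norm u = 1" and w: "norm w = 1"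
    using qB by (cases q) (auto simp: boundary_tori_def)
  have m: "meridian k \<phi> p = (\<lambda>t. \<phi> (j, u, w * cis (2 * pi * t)))"
    by (simp add: meridian_def Let_def q_def[symmetric] q)
  have inB: "(j, u, w * cis (2 * pi * t)) \<in> boundary_tori k" for t
    using j u w by (simp add: boundary_tori_def norm_mult)
  have inS: "(j, u, w * cis (2 * pi * t)) \<in> solid_tori k" for t
    using j u w by (simp add: solid_tori_def norm_mult)
  have "continuous_on {0..1} (\<lambda>t. \<phi> (j, u, w * cis (2 * pi * t)))"
  proof (rule continuous_on_compose2[OF cphi, of _ "\<lambda>t. (j, u, w * cis (2 * pi * t))"])
    show "continuous_on {0..1} (\<lambda>t. (j, u, w * cis (2 * pi * t)))"
      by (intro continuous_intros)
    show "(\<lambda>t. (j, u, w * cis (2 * pi * t))) ` {0..1} \<subseteq> solid_tori k"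
      using inS by blast
  qed
  moreover have "path_image (\<lambda>t. \<phi> (j, u, w * cis (2 * pi * t))) \<subseteq> bdry k \<phi>"
    using inB by (auto simp: path_image_def bdry_def)
  moreover have "\<phi> (j, u, w) = p" using pq q by simp
  ultimately show ?thesis unfolding m by (simp add: path_def pathstart_def pathfinish_def)
qed

lemma bqP: "(a0,a1) \<in> bq_pairs k \<phi> z0 z1 \<longleftrightarrow> path a0 \<and> path a1 \<and>
        path_image a0 \<subseteq> exterior k \<phi> \<and> path_image a1 \<subseteq> exterior k \<phi> \<and>
        pathstart a0 \<in> bdry k \<phi> \<and> pathstart a1 = pathstart a0 \<and>
        pathfinish a0 = z0 \<and> pathfinish a1 = z1"
  by (simp add: bq_pairs_def)

lemma bqR: "((a0,a1),(b0,b1)) \<in> bq_rel k \<phi> z0 z1 \<longleftrightarrow>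
   (a0,a1) \<in> bq_pairs k \<phi> z0 z1 \<and> (b0,b1) \<in> bq_pairs k \<phi> z0 z1 \<and>
   (\<exists>H. mhom (exterior k \<phi>) (bdry k \<phi>) z0 z1 (reversepath a0 +++ a1) (reversepath b0 +++ b1) H)"
  unfolding bq_rel_def mhom_def by simp

lemma gam:
  assumes "(a0,a1) \<in> bq_pairs k \<phi> z0 z1"
  shows "path (reversepath a0 +++ a1)" "path_image (reversepath a0 +++ a1) \<subseteq> exterior k \<phi>"
    "(reversepath a0 +++ a1) 0 = z0" "(reversepath a0 +++ a1) 1 = z1"
    "(reversepath a0 +++ a1) (1/2) \<in> bdry k \<phi>"
proof -
  note a = assms[unfolded bqP]
  show "path (reversepath a0 +++ a1)" using a by simp
  show "path_image (reversepath a0 +++ a1) \<subseteq> exterior k \<phi>"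
    using a by (intro subset_trans[OF path_image_join_subset]) simp
  show "(reversepath a0 +++ a1) 0 = z0" using a
    by (simp add: joinpaths_def reversepath_def pathfinish_def)
  show "(reversepath a0 +++ a1) 1 = z1" using a
    by (simp add: joinpaths_def pathfinish_def)
  show "(reversepath a0 +++ a1) (1/2) \<in> bdry k \<phi>" using a
    by (simp add: joinpaths_def reversepath_def pathstart_def)
qed

lemma bq_equiv: "equiv (bq_pairs k \<phi> z0 z1) (bq_rel k \<phi> z0 z1)"
proof (rule equivI)
  show "bq_rel k \<phi> z0 z1 \<subseteq> bq_pairs k \<phi> z0 z1 \<times> bq_pairs k \<phi> z0 z1"
    by (auto simp: bq_rel_def)
  show "refl_on (bq_pairs k \<phi> z0 z1) (bq_rel k \<phi> z0 z1)"
  proof (rule refl_onI)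
    fix x assume x: "x \<in> bq_pairs k \<phi> z0 z1"
    obtain a0 a1 where xe: "x = (a0, a1)" by (cases x)
    have "(a0,a1) \<in> bq_pairs k \<phi> z0 z1" using x xe by simp
    then show "(x, x) \<in> bq_rel k \<phi> z0 z1" unfolding xe bqR
      using mhom_refl[OF gam[OF \<open>(a0,a1) \<in> bq_pairs k \<phi> z0 z1\<close>]] by blast
  qed
  show "sym (bq_rel k \<phi> z0 z1)"
  proof (rule symI)
    fix x y assume "(x, y) \<in> bq_rel k \<phi> z0 z1"
    then show "(y, x) \<in> bq_rel k \<phi> z0 z1"
      by (cases x, cases y) (auto simp: bqR dest: mhom_sym)
  qed
  show "trans (bq_rel k \<phi> z0 z1)"
  proof (rule transI)
    fix x y z assume "(x, y) \<in> bq_rel k \<phi> z0 z1" "(y, z) \<in> bq_rel k \<phi> z0 z1"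
    then show "(x, z) \<in> bq_rel k \<phi> z0 z1"
      by (cases x, cases y, cases z) (auto simp: bqR dest: mhom_trans)
  qed
qed

lemma T_P:
  assumes x: "(a0,a1) \<in> bq_pairs k \<phi> z0 z1"
    and pc: "path c" "path_image c \<subseteq> exterior k \<phi>" "pathstart c = z0" "pathfinish c = z0"
  shows "(a0 +++ c, a1) \<in> bq_pairs k \<phi> z0 z1"
proof -
  note a = x[unfolded bqP]
  have "path_image (a0 +++ c) \<subseteq> exterior k \<phi>"
    using a pc by (intro subset_trans[OF path_image_join_subset]) simp
  then show ?thesis using a pc by (simp add: bqP)
qed

lemma T_cong:
  assumes xy: "((a0,a1),(b0,b1)) \<in> bq_rel k \<phi> z0 z1"
    and pc: "path c" "path_image c \<subseteq> exterior k \<phi>" "pathstart c = z0" "pathfinish c = z0"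
  shows "((a0 +++ c, a1),(b0 +++ c, b1)) \<in> bq_rel k \<phi> z0 z1"
proof -
  from xy obtain H where P: "(a0,a1) \<in> bq_pairs k \<phi> z0 z1" "(b0,b1) \<in> bq_pairs k \<phi> z0 z1"
    and H: "mhom (exterior k \<phi>) (bdry k \<phi>) z0 z1 (reversepath a0 +++ a1) (reversepath b0 +++ b1) H"
    unfolding bqR by blast
  have "pathfinish a0 = z0" "pathfinish b0 = z0" using P by (auto simp: bqP)
  note M = mhom_prefix[OF H pc this]
  show ?thesis unfolding bqR using T_P[OF P(1) pc] T_P[OF P(2) pc] M by blast
qed

lemma T_canc:
  assumes x: "(a0,a1) \<in> bq_pairs k \<phi> z0 z1"
    and pc: "path c" "path_image c \<subseteq> exterior k \<phi>" "pathstart c = z0" "pathfinish c = z0"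
  shows "(((a0 +++ c) +++ reversepath c, a1),(a0, a1)) \<in> bq_rel k \<phi> z0 z1"
proof -
  note a = x[unfolded bqP]
  let ?E = "exterior k \<phi>"
  have pr: "path (reversepath c)" "path_image (reversepath c) \<subseteq> ?E"
    "pathstart (reversepath c) = z0" "pathfinish (reversepath c) = z0" using pc by auto
  have P1: "((a0 +++ c) +++ reversepath c, a1) \<in> bq_pairs k \<phi> z0 z1"
    using T_P[OF T_P[OF x pc] pr] .
  have h1: "homotopic_paths ?E (a0 +++ (c +++ reversepath c)) ((a0 +++ c) +++ reversepath c)"
    using a pc pr by (intro homotopic_paths_assoc) auto
  have h2: "homotopic_paths ?E (a0 +++ (c +++ reversepath c)) (a0 +++ linepath z0 z0)"
    using a pc by (intro homotopic_paths_join homotopic_paths_rinv[of c ?E, simplified pc(3)]) auto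
  have h3: "homotopic_paths ?E (a0 +++ linepath z0 z0) a0"
    using a by (intro homotopic_paths_rid') auto
  have "homotopic_paths ?E ((a0 +++ c) +++ reversepath c) a0"
    using homotopic_paths_trans[OF homotopic_paths_sym[OF h1] homotopic_paths_trans[OF h2 h3]] .
  then have hr: "homotopic_paths ?E (reversepath ((a0 +++ c) +++ reversepath c)) (reversepath a0)"
    by (simp add: homotopic_paths_reversepath)
  have "\<exists>H. mhom ?E (bdry k \<phi>) z0 z1 (reversepath ((a0 +++ c) +++ reversepath c) +++ a1) (reversepath a0 +++ a1) H"
    by (rule mhom_from_homotopic[OF hr]) (use a pc in auto)
  then show ?thesis unfolding bqR using P1 x by blast
qed

lemma mhom_rev:
  assumes H: "mhom E B z0 z1 g h H"
  shows "mhom E B z1 z0 (reversepath g) (reversepath h) (\<lambda>x. H (fst x, 1 - snd x))"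
proof (rule mhomI)
  show "continuous_on ({0..1} \<times> {0..1}) (\<lambda>x. H (fst x, 1 - snd x))"
  proof (rule continuous_on_compose2[OF mhomD(1)[OF H], of _ "\<lambda>x. (fst x, 1 - snd x)"])
    show "continuous_on ({0..1} \<times> {0..1}) (\<lambda>x::real\<times>real. (fst x, 1 - snd x))"
      by (intro continuous_intros)
    show "(\<lambda>x::real\<times>real. (fst x, 1 - snd x)) ` ({0..1} \<times> {0..1}) \<subseteq> {0..1} \<times> {0..1}"
      by (auto simp: image_subset_iff)
  qed
qed (auto simp: reversepath_def intro!: mhomD[OF H])

lemma swapP:
  "(a0,a1) \<in> bq_pairs k \<phi> z0 z1 \<Longrightarrow> (a1,a0) \<in> bq_pairs k \<phi> z1 z0"
  by (auto simp: bqP)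

lemma swapR:
  assumes "((a0,a1),(b0,b1)) \<in> bq_rel k \<phi> z0 z1"
  shows "((a1,a0),(b1,b0)) \<in> bq_rel k \<phi> z1 z0"
proof -
  from assms obtain H where P: "(a0,a1) \<in> bq_pairs k \<phi> z0 z1" "(b0,b1) \<in> bq_pairs k \<phi> z0 z1"
    and H: "mhom (exterior k \<phi>) (bdry k \<phi>) z0 z1 (reversepath a0 +++ a1) (reversepath b0 +++ b1) H"
    unfolding bqR by blast
  have ra: "reversepath (reversepath a0 +++ a1) = reversepath a1 +++ a0"
    using P(1) by (simp add: bqP reversepath_joinpaths)
  have rb: "reversepath (reversepath b0 +++ b1) = reversepath b1 +++ b0"
    using P(2) by (simp add: bqP reversepath_joinpaths)
  show ?thesis unfolding bqR using swapP[OF P(1)] swapP[OF P(2)] mhom_rev[OF H] ra rb by metis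
qed



lemma D_P:
  assumes x: "(a0,a1) \<in> bq_pairs k \<phi> z0 z1"
    and pc: "path c" "path_image c \<subseteq> exterior k \<phi>" "pathstart c = z1" "pathfinish c = z1"
  shows "(a0, a1 +++ c) \<in> bq_pairs k \<phi> z0 z1"
  using swapP[OF T_P[OF swapP[OF x] pc]] .

lemma D_cong:
  assumes xy: "((a0,a1),(b0,b1)) \<in> bq_rel k \<phi> z0 z1"
    and pc: "path c" "path_image c \<subseteq> exterior k \<phi>" "pathstart c = z1" "pathfinish c = z1"
  shows "((a0, a1 +++ c),(b0, b1 +++ c)) \<in> bq_rel k \<phi> z0 z1"
  using swapR[OF T_cong[OF swapR[OF xy] pc]] .

lemma D_canc:
  assumes x: "(a0,a1) \<in> bq_pairs k \<phi> z0 z1"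
    and pc: "path c" "path_image c \<subseteq> exterior k \<phi>" "pathstart c = z1" "pathfinish c = z1"
  shows "((a0, (a1 +++ c) +++ reversepath c),(a0, a1)) \<in> bq_rel k \<phi> z0 z1"
  using swapR[OF T_canc[OF swapP[OF x] pc]] .

lemma class_rep:
  assumes "a \<in> bq_pairs k \<phi> z0 z1 // bq_rel k \<phi> z0 z1"
  shows "(SOME y. y \<in> a) \<in> bq_pairs k \<phi> z0 z1"
proof -
  obtain b where b: "b \<in> bq_pairs k \<phi> z0 z1" "a = bq_rel k \<phi> z0 z1 `` {b}"
    using assms by (rule quotientE)
  have "b \<in> a" using b equiv_class_self[OF bq_equiv] by simp
  then have "(SOME y. y \<in> a) \<in> a" by (rule someI)
  then have "(b, SOME y. y \<in> a) \<in> bq_rel k \<phi> z0 z1" using b by simp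
  then show ?thesis by (auto simp: bq_rel_def)
qed

lemma loop_from_pair:
  assumes tl: "tubular_link k \<phi>" and BE: "bdry k \<phi> \<subseteq> exterior k \<phi>"
    and b: "path b0" "path_image b0 \<subseteq> exterior k \<phi>" "pathstart b0 \<in> bdry k \<phi>" "pathfinish b0 = z"
  shows "path (reversepath b0 +++ (meridian k \<phi> (pathstart b0) +++ b0)) \<and>
    path_image (reversepath b0 +++ (meridian k \<phi> (pathstart b0) +++ b0)) \<subseteq> exterior k \<phi> \<and>
    pathstart (reversepath b0 +++ (meridian k \<phi> (pathstart b0) +++ b0)) = z \<and>
    pathfinish (reversepath b0 +++ (meridian k \<phi> (pathstart b0) +++ b0)) = z"
proof -
  note m = meridian_loop[OF tl b(3)]
  have mi: "path_image (meridian k \<phi> (pathstart b0)) \<subseteq> exterior k \<phi>" using m BE by blast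
  have "path_image (meridian k \<phi> (pathstart b0) +++ b0) \<subseteq> exterior k \<phi>"
    using mi b m by (intro subset_trans[OF path_image_join_subset]) simp
  then have "path_image (reversepath b0 +++ (meridian k \<phi> (pathstart b0) +++ b0)) \<subseteq> exterior k \<phi>"
    using b by (intro subset_trans[OF path_image_join_subset]) simp
  then show ?thesis using m b by simp
qed

theorem mainTheorem5:
  fixes k :: nat
    and \<phi> :: "nat \<times> complex \<times> complex \<Rightarrow> real^4"
    and \<beta> :: "real^3 \<Rightarrow> real^4"
    and v :: "real^3"
    and a :: "((real \<Rightarrow> real^4) \<times> (real \<Rightarrow> real^4)) set"
  assumes "0 < k"
    and "tubular_link k \<phi>"
    and "continuous_on (cball 0 1) \<beta>" and "inj_on \<beta> (cball 0 1)" and "\<beta> ` cball 0 1 \<subseteq> S3"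
    and "nbhd k \<phi> \<subseteq> \<beta> ` ball 0 1"
    and "norm v = 1"
    and "a \<in> top_biquandle k \<phi> (\<beta> v) (\<beta> (- v))"
  shows "bij_betw (\<lambda>x. bq_up k \<phi> (\<beta> v) (\<beta> (- v)) x a)
            (top_biquandle k \<phi> (\<beta> v) (\<beta> (- v))) (top_biquandle k \<phi> (\<beta> v) (\<beta> (- v)))
       \<and> bij_betw (\<lambda>x. bq_down k \<phi> (\<beta> v) (\<beta> (- v)) x a)
            (top_biquandle k \<phi> (\<beta> v) (\<beta> (- v))) (top_biquandle k \<phi> (\<beta> v) (\<beta> (- v)))"
proof -
  define z0 where "z0 = \<beta> v"
  define z1 where "z1 = \<beta> (- v)"
  let ?P = "bq_pairs k \<phi> z0 z1" and ?R = "bq_rel k \<phi> z0 z1"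
  have tl: "tubular_link k \<phi>" by fact
  have BE: "bdry k \<phi> \<subseteq> exterior k \<phi>"
    by (rule bdry_sub_exterior) (use assms in auto)
  have aQ: "a \<in> ?P // ?R" using assms(8) by (simp add: top_biquandle_def z0_def z1_def)
  obtain b0 b1 where bdef: "(SOME y. y \<in> a) = (b0, b1)" by fastforce
  have bP: "(b0, b1) \<in> ?P" using class_rep[OF aQ] bdef by simp
  note bb = bP[unfolded bqP]
  define c where "c = reversepath b0 +++ (meridian k \<phi> (pathstart b0) +++ b0)"
  define d where "d = reversepath b1 +++ (meridian k \<phi> (pathstart b1) +++ b1)"
  have c: "path c" "path_image c \<subseteq> exterior k \<phi>" "pathstart c = z0" "pathfinish c = z0"
    using loop_from_pair[OF tl BE, of b0 z0] bb unfolding c_def by auto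
  have d: "path d" "path_image d \<subseteq> exterior k \<phi>" "pathstart d = z1" "pathfinish d = z1"
    using loop_from_pair[OF tl BE, of b1 z1] bb unfolding d_def by auto
  have rc: "path (reversepath c)" "path_image (reversepath c) \<subseteq> exterior k \<phi>"
    "pathstart (reversepath c) = z0" "pathfinish (reversepath c) = z0" using c by auto
  have rd: "path (reversepath d)" "path_image (reversepath d) \<subseteq> exterior k \<phi>"
    "pathstart (reversepath d) = z1" "pathfinish (reversepath d) = z1" using d by auto
  have up: "(\<lambda>x. bq_up k \<phi> z0 z1 x a) = (\<lambda>X. ?R `` {(\<lambda>x. (fst x +++ c, snd x)) (SOME x. x \<in> X)})"
    by (simp add: bq_up_def Let_def bdef c_def)
  have down: "(\<lambda>x. bq_down k \<phi> z0 z1 x a) = (\<lambda>X. ?R `` {(\<lambda>x. (fst x, snd x +++ d)) (SOME x. x \<in> X)})"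
    by (simp add: bq_down_def Let_def bdef d_def)
  have b1: "bij_betw (\<lambda>x. bq_up k \<phi> z0 z1 x a) (?P // ?R) (?P // ?R)"
    unfolding up
  proof (rule quot_bij[OF bq_equiv, where T' = "\<lambda>x. (fst x +++ reversepath c, snd x)"])
    show "(fst x +++ c, snd x) \<in> ?P" if "x \<in> ?P" for x
      using T_P[of "fst x" "snd x", OF _ c] that by simp
    show "(fst x +++ reversepath c, snd x) \<in> ?P" if "x \<in> ?P" for x
      using T_P[of "fst x" "snd x", OF _ rc] that by simp
    show "((fst x +++ c, snd x), (fst y +++ c, snd y)) \<in> ?R" if "(x,y) \<in> ?R" for x y
      using T_cong[of "fst x" "snd x" "fst y" "snd y", OF _ c] that by simp
    show "((fst x +++ reversepath c, snd x), (fst y +++ reversepath c, snd y)) \<in> ?R" if "(x,y) \<in> ?R" for x y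
      using T_cong[of "fst x" "snd x" "fst y" "snd y", OF _ rc] that by simp
    show "((fst (fst x +++ c, snd x) +++ reversepath c, snd (fst x +++ c, snd x)), x) \<in> ?R" if "x \<in> ?P" for x
      using T_canc[of "fst x" "snd x", OF _ c] that by simp
    show "((fst (fst x +++ reversepath c, snd x) +++ c, snd (fst x +++ reversepath c, snd x)), x) \<in> ?R" if "x \<in> ?P" for x
      using T_canc[of "fst x" "snd x", OF _ rc] that by simp
  qed
  have b2: "bij_betw (\<lambda>x. bq_down k \<phi> z0 z1 x a) (?P // ?R) (?P // ?R)"
    unfolding down
  proof (rule quot_bij[OF bq_equiv, where T' = "\<lambda>x. (fst x, snd x +++ reversepath d)"])
    show "(fst x, snd x +++ d) \<in> ?P" if "x \<in> ?P" for x
      using D_P[of "fst x" "snd x", OF _ d] that by simp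
    show "(fst x, snd x +++ reversepath d) \<in> ?P" if "x \<in> ?P" for x
      using D_P[of "fst x" "snd x", OF _ rd] that by simp
    show "((fst x, snd x +++ d), (fst y, snd y +++ d)) \<in> ?R" if "(x,y) \<in> ?R" for x y
      using D_cong[of "fst x" "snd x" "fst y" "snd y", OF _ d] that by simp
    show "((fst x, snd x +++ reversepath d), (fst y, snd y +++ reversepath d)) \<in> ?R" if "(x,y) \<in> ?R" for x y
      using D_cong[of "fst x" "snd x" "fst y" "snd y", OF _ rd] that by simp
    show "((fst (fst x, snd x +++ d), snd (fst x, snd x +++ d) +++ reversepath d), x) \<in> ?R" if "x \<in> ?P" for x
      using D_canc[of "fst x" "snd x", OF _ d] that by simp
    show "((fst (fst x, snd x +++ reversepath d), snd (fst x, snd x +++ reversepath d) +++ d), x) \<in> ?R" if "x \<in> ?P" for x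
      using D_canc[of "fst x" "snd x", OF _ rd] that by simp
  qed
  show ?thesis using b1 b2 by (simp add: top_biquandle_def z0_def z1_def)
qed

end
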